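(* Let $\mathbb{K}\in\{\mathbb{R},\mathbb{C}\}$, $\star\in\{*,T\}$, $\epsilon_1,\epsilon_2\in\{1,-1\}$, and let $Q(\lambda)=\lambda^2M+\lambda D+K\in\mathbb{K}^{n\times n}[\lambda]$ satisfy $M^\star=\epsilon_1M$, $D^\star=\epsilon_2D$, $K^\star=\epsilon_1K$. Suppose $(X_c,\Lambda_c)\in\mathbb{K}^{n\times p_1}\times\mathbb{K}^{p_1\times p_1}$ and $(X_f,\Lambda_f)\in\mathbb{K}^{n\times p_2}\times\mathbb{K}^{p_2\times p_2}$ are invariant pairs of $Q(\lambda)$, and let $\Lambda_a\in\mathbb{K}^{p_1\times p_1}$. Let $P\in\mathbb{K}^{p_1\times p_1}$ be a nonsingular matrix such that $R:=X_c^\star MX_cP\Lambda_aP^{-1}+\epsilon_1\epsilon_2\Lambda_c^\star X_c^\star MX_c+X_c^\star DX_c$ is nonsingular, and assume $\sigma(\Lambda_c)\cap\sigma(\epsilon_1\epsilon_2\Lambda_f^\star)=\emptyset$. Let $Z=(\Lambda_c-P\Lambda_aP^{-1})R^{-1}$ and $\triangle M=MX_cZX_c^\star M$, $\triangle D=\epsilon_1\epsilon_2MX_cZ\Lambda_c^\star X_c^\star M+MX_cZX_c^\star D+MX_c\Lambda_cZX_c^\star M+DX_cZX_c^\star M$, $\triangle K=\epsilon_1\epsilon_2MX_c\Lambda_cZ\Lambda_c^\star X_c^\star M+MX_c\Lambda_cZX_c^\star D+\epsilon_1\epsilon_2DX_cZ\Lambda_c^\star X_c^\star M+DX_cZX_c^\star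 D$. Then $(X_a,\Lambda_a)$ with $X_a=X_cP$, and $(X_f,\Lambda_f)$, are invariant pairs of $Q_\triangle(\lambda)=\lambda^2(M+\triangle M)+\lambda(D+\triangle D)+(K+\triangle K)\in\mathbb{K}^{n\times n}[\lambda]$. Moreover, with $S:=X_c^\star MX_c\Lambda_c+\epsilon_1\epsilon_2\Lambda_c^\star X_c^\star MX_c+X_c^\star DX_c$, if $SP\Lambda_aP^{-1}=\epsilon_1(SP\Lambda_aP^{-1})^\star$, then $(M+\triangle M)^\star=\epsilon_1(M+\triangle M)$, $(D+\triangle D)^\star=\epsilon_2(D+\triangle D)$ and $(K+\triangle K)^\star=\epsilon_1(K+\triangle K)$.
   Context: For a matrix $A$, $A^*$ is the conjugate transpose and $A^T$ the transpose; $A^\star$ means $A^*$ if $\star=*$ and $A^T$ if $\star=T$. $\sigma(A)$ is the spectrum of a square matrix $A$. A pair $(X,\Lambda)\in\mathbb{K}^{n\times p}\times\mathbb{K}^{p\times p}$ is an invariant pair of $Q(\lambda)=\lambda^2M+\lambda D+K$ if $Q(X,\Lambda):=MX\Lambda^2+DX\Lambda+KX=0$. *)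

theory Defs
  imports "Jordan_Normal_Form.Spectral_Radius" "Jordan_Normal_Form.Schur_Decomposition"
    "Jordan_Normal_Form.Gauss_Jordan_Elimination"
begin

text \<open>Matrices over K are represented as complex matrices; the flag realK selects K = R
  (all given data have real entries).\<close>

definition mstar :: "bool \<Rightarrow> complex mat \<Rightarrow> complex mat" where
  "mstar conjT A = (if conjT then mat_adjoint A else transpose_mat A)"

definition real_mat :: "complex mat \<Rightarrow> bool" where
  "real_mat A \<longleftrightarrow> (\<forall>i<dim_row A. \<forall>j<dim_col A. A $$ (i,j) \<in> \<real>)"

definition minv :: "complex mat \<Rightarrow> complex mat" where
  "minv A = the (mat_inverse A)"

definition invariant_pair ::
  "complex mat \<Rightarrow> complex mat \<Rightarrow> complex mat \<Rightarrow> complex mat \<Rightarrow> complex mat \<Rightarrow> bool" where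
  "invariant_pair M D K X L \<longleftrightarrow>
     M * X * (L * L) + D * X * L + K * X = 0\<^sub>m (dim_row M) (dim_col L)"

end

theory Submission
  imports Defs
begin


definition boxed :: "nat \<Rightarrow> (nat \<Rightarrow> nat \<Rightarrow> complex) \<Rightarrow> bool" where
  "boxed N f \<longleftrightarrow> (\<forall>i j. N \<le> i \<or> N \<le> j \<longrightarrow> f i j = 0)"

lemma boxed_mono: "boxed N f \<Longrightarrow> N \<le> N' \<Longrightarrow> boxed N' f"
  unfolding boxed_def by auto

typedef fm = "{f. \<exists>N. boxed N f}"
  by (rule exI[of _ "\<lambda>_ _. 0"], auto simp: boxed_def)

definition bnd :: "(nat \<Rightarrow> nat \<Rightarrow> complex) \<Rightarrow> nat" where
  "bnd f = (LEAST N. boxed N f)"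

definition mulr :: "(nat \<Rightarrow> nat \<Rightarrow> complex) \<Rightarrow> (nat \<Rightarrow> nat \<Rightarrow> complex) \<Rightarrow> nat \<Rightarrow> nat \<Rightarrow> complex" where
  "mulr f g i j = (\<Sum>k<bnd f. f i k * g k j)"

lemma mulr_eq: assumes "boxed N f" shows "mulr f g i j = (\<Sum>k<N. f i k * g k j)"
proof -
  have le: "bnd f \<le> N" unfolding bnd_def using assms by (rule Least_le)
  have bb: "boxed (bnd f) f" unfolding bnd_def using assms by (rule LeastI)
  show ?thesis unfolding mulr_def
    by (rule sum.mono_neutral_left, insert le bb, auto simp: boxed_def)
qed

lemma boxed_mulr: "boxed N f \<Longrightarrow> boxed N g \<Longrightarrow> boxed N (mulr f g)"
  unfolding boxed_def by (auto simp: mulr_eq[of N f] boxed_def)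

lemma boxed_Rep: "\<exists>N. boxed N (Rep_fm a)" using Rep_fm[of a] by auto

lemma boxed_Rep3: "\<exists>N. boxed N (Rep_fm a) \<and> boxed N (Rep_fm b) \<and> boxed N (Rep_fm c)"
proof -
  obtain N1 N2 N3 where "boxed N1 (Rep_fm a)" "boxed N2 (Rep_fm b)" "boxed N3 (Rep_fm c)"
    using boxed_Rep by metis
  thus ?thesis by (intro exI[of _ "max N1 (max N2 N3)"]) (auto elim: boxed_mono)
qed

instantiation fm :: ring
begin
definition "0 = Abs_fm (\<lambda>_ _. 0)"
definition "a + b = Abs_fm (\<lambda>i j. Rep_fm a i j + Rep_fm b i j)"
definition "- a = Abs_fm (\<lambda>i j. - Rep_fm a i j)"
definition "a - b = Abs_fm (\<lambda>i j. Rep_fm a i j - Rep_fm b i j)"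
definition "a * b = Abs_fm (mulr (Rep_fm a) (Rep_fm b))"

lemma Rep_zero: "Rep_fm 0 = (\<lambda>_ _. 0)"
  unfolding zero_fm_def by (rule Abs_fm_inverse, auto simp: boxed_def)
lemma Rep_plus: "Rep_fm (a + b) = (\<lambda>i j. Rep_fm a i j + Rep_fm b i j)"
proof -
  obtain N where "boxed N (Rep_fm a) \<and> boxed N (Rep_fm b) \<and> boxed N (Rep_fm a)" using boxed_Rep3 by blast
  thus ?thesis unfolding plus_fm_def by (intro Abs_fm_inverse, auto simp: boxed_def intro!: exI[of _ N])
qed
lemma Rep_uminus: "Rep_fm (- a) = (\<lambda>i j. - Rep_fm a i j)"
proof -
  obtain N where "boxed N (Rep_fm a)" using boxed_Rep by blast
  thus ?thesis unfolding uminus_fm_def by (intro Abs_fm_inverse, auto simp: boxed_def intro!: exI[of _ N])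
qed
lemma Rep_minus: "Rep_fm (a - b) = (\<lambda>i j. Rep_fm a i j - Rep_fm b i j)"
proof -
  obtain N where "boxed N (Rep_fm a) \<and> boxed N (Rep_fm b) \<and> boxed N (Rep_fm a)" using boxed_Rep3 by blast
  thus ?thesis unfolding minus_fm_def by (intro Abs_fm_inverse, auto simp: boxed_def intro!: exI[of _ N])
qed
lemma Rep_times: "Rep_fm (a * b) = mulr (Rep_fm a) (Rep_fm b)"
proof -
  obtain N where "boxed N (Rep_fm a) \<and> boxed N (Rep_fm b) \<and> boxed N (Rep_fm a)" using boxed_Rep3 by blast
  thus ?thesis unfolding times_fm_def by (intro Abs_fm_inverse, auto intro!: exI[of _ N] boxed_mulr)
qed

instance
proof
  fix a b c :: fm
  obtain N where N: "boxed N (Rep_fm a)" "boxed N (Rep_fm b)" "boxed N (Rep_fm c)"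
    using boxed_Rep3[of a b c] by blast
  have Nab: "boxed N (Rep_fm (a*b))" "boxed N (Rep_fm (b*c))" "boxed N (Rep_fm (a+b))"
    using N by (auto simp: Rep_times Rep_plus intro: boxed_mulr, auto simp: boxed_def)
  show "a + b + c = a + (b + c)" by (rule Rep_fm_inject[THEN iffD1], auto simp: Rep_plus ac_simps)
  show "a + b = b + a" by (rule Rep_fm_inject[THEN iffD1], auto simp: Rep_plus ac_simps)
  show "0 + a = a" by (rule Rep_fm_inject[THEN iffD1], auto simp: Rep_plus Rep_zero)
  show "- a + a = 0" by (rule Rep_fm_inject[THEN iffD1], auto simp: Rep_plus Rep_zero Rep_uminus)
  show "a - b = a + - b" by (rule Rep_fm_inject[THEN iffD1], auto simp: Rep_plus Rep_minus Rep_uminus)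
  show "a * b * c = a * (b * c)"
  proof (rule Rep_fm_inject[THEN iffD1], rule ext, rule ext)
    fix i j
    have "Rep_fm (a * b * c) i j = (\<Sum>l<N. (\<Sum>k<N. Rep_fm a i k * Rep_fm b k l) * Rep_fm c l j)"
      unfolding Rep_times using Nab N by (simp add: mulr_eq[of N] Rep_times)
    also have "\<dots> = (\<Sum>l<N. \<Sum>k<N. Rep_fm a i k * Rep_fm b k l * Rep_fm c l j)"
      by (simp add: sum_distrib_right)
    also have "\<dots> = (\<Sum>k<N. \<Sum>l<N. Rep_fm a i k * Rep_fm b k l * Rep_fm c l j)"
      by (rule sum.swap)
    also have "\<dots> = (\<Sum>k<N. Rep_fm a i k * (\<Sum>l<N. Rep_fm b k l * Rep_fm c l j))"
      by (simp add: sum_distrib_left mult.assoc)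
    also have "\<dots> = Rep_fm (a * (b * c)) i j"
      unfolding Rep_times using Nab N by (simp add: mulr_eq[of N] Rep_times)
    finally show "Rep_fm (a * b * c) i j = Rep_fm (a * (b * c)) i j" .
  qed
  show "(a + b) * c = a * c + b * c"
    apply (rule Rep_fm_inject[THEN iffD1], rule ext, rule ext)
    using N Nab by (simp add: Rep_plus Rep_times mulr_eq[of N] distrib_right sum.distrib)
  show "a * (b + c) = a * b + a * c"
    apply (rule Rep_fm_inject[THEN iffD1], rule ext, rule ext)
    using N Nab by (simp add: Rep_plus Rep_times mulr_eq[of N] distrib_left sum.distrib)
qed
end

definition E :: "complex mat \<Rightarrow> fm" where
  "E A = Abs_fm (\<lambda>i j. if i < dim_row A \<and> j < dim_col A then A $$ (i,j) else 0)"

lemma Rep_E: "Rep_fm (E A) = (\<lambda>i j. if i < dim_row A \<and> j < dim_col A then A $$ (i,j) else 0)"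
  unfolding E_def by (rule Abs_fm_inverse, auto simp: boxed_def intro!: exI[of _ "max (dim_row A) (dim_col A)"])

lemma E_inj: assumes "E A = E B" "dim_row A = dim_row B" "dim_col A = dim_col B" shows "A = B"
proof (rule eq_matI)
  fix i j assume "i < dim_row B" "j < dim_col B"
  thus "A $$ (i,j) = B $$ (i,j)" using arg_cong[OF assms(1), of Rep_fm] assms(2,3)
    unfolding Rep_E by (metis (mono_tags))
qed (insert assms, auto)

lemma E_add: "dim_row A = dim_row B \<Longrightarrow> dim_col A = dim_col B \<Longrightarrow> E (A + B) = E A + E B"
  by (rule Rep_fm_inject[THEN iffD1], auto simp: Rep_E Rep_plus intro!: ext)
lemma E_minus: "dim_row A = dim_row B \<Longrightarrow> dim_col A = dim_col B \<Longrightarrow> E (A - B) = E A - E B"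
  by (rule Rep_fm_inject[THEN iffD1], auto simp: Rep_E Rep_minus intro!: ext)
lemma E_uminus: "E (- A) = - E A"
  by (rule Rep_fm_inject[THEN iffD1], auto simp: Rep_E Rep_uminus intro!: ext)
lemma E_zero: "E (0\<^sub>m r c) = 0"
  by (rule Rep_fm_inject[THEN iffD1], auto simp: Rep_E Rep_zero intro!: ext)

lemma E_mult: assumes "dim_col A = dim_row B" shows "E (A * B) = E A * E B"
proof (rule Rep_fm_inject[THEN iffD1], rule ext, rule ext)
  fix i j
  define N where "N = max (dim_row A) (max (dim_col A) (dim_col B))"
  have bx: "boxed N (Rep_fm (E A))" unfolding Rep_E boxed_def N_def by auto
  have "Rep_fm (E A * E B) i j = (\<Sum>k<N. Rep_fm (E A) i k * Rep_fm (E B) k j)"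
    unfolding Rep_times by (rule mulr_eq[OF bx])
  also have "\<dots> = (if i < dim_row A \<and> j < dim_col B then (\<Sum>k<dim_col A. A $$ (i,k) * B $$ (k,j)) else 0)"
  proof (cases "i < dim_row A \<and> j < dim_col B")
    case True
    have "(\<Sum>k<N. Rep_fm (E A) i k * Rep_fm (E B) k j) = (\<Sum>k<dim_col A. Rep_fm (E A) i k * Rep_fm (E B) k j)"
      by (rule sum.mono_neutral_right, auto simp: N_def Rep_E)
    also have "\<dots> = (\<Sum>k<dim_col A. A $$ (i,k) * B $$ (k,j))"
      by (rule sum.cong, insert True assms, auto simp: Rep_E)
    finally show ?thesis using True by simp
  qed (auto simp: Rep_E)
  also have "\<dots> = Rep_fm (E (A * B)) i j"
    unfolding Rep_E using assms by (auto simp: scalar_prod_def lessThan_atLeast0)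
  finally show "Rep_fm (E (A * B)) i j = Rep_fm (E A * E B) i j" by simp
qed




lemma smult_one_mat[simp]: "(1::complex) \<cdot>\<^sub>m A = A"
  by (rule eq_matI, auto)
lemma smult_mone_mat[simp]: "(-1::complex) \<cdot>\<^sub>m A = - A"
  by (rule eq_matI, auto)

definition sf :: "bool \<Rightarrow> complex \<Rightarrow> complex" where "sf c x = (if c then cnj x else x)"

lemma mstar_alt: "mstar c A = mat (dim_col A) (dim_row A) (\<lambda>(i,j). sf c (A $$ (j,i)))"
  unfolding mstar_def mat_adjoint_def mat_of_rows_def sf_def
  by (rule eq_matI, auto)

lemma mstar_dims[simp]: "dim_row (mstar c A) = dim_col A" "dim_col (mstar c A) = dim_row A"
  unfolding mstar_alt by auto

lemma mstar_index[simp]: "i < dim_col A \<Longrightarrow> j < dim_row A \<Longrightarrow> mstar c A $$ (i,j) = sf c (A $$ (j,i))"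
  unfolding mstar_alt by auto

lemma mstar_carrier[simp]: "A \<in> carrier_mat r k \<Longrightarrow> mstar c A \<in> carrier_mat k r"
  by (intro carrier_matI) (auto dest: carrier_matD)

lemma sf_sf[simp]: "sf c (sf c x) = x" by (auto simp: sf_def)
lemma sf_add: "sf c (x + y) = sf c x + sf c y" by (auto simp: sf_def)
lemma sf_mult: "sf c (x * y) = sf c x * sf c y" by (auto simp: sf_def)
lemma sf_uminus: "sf c (- x) = - sf c x" by (auto simp: sf_def)
lemma sf_minus: "sf c (x - y) = sf c x - sf c y" by (auto simp: sf_def)
lemma sf_sum: "sf c (sum f A) = (\<Sum>x\<in>A. sf c (f x))" by (auto simp: sf_def)

lemma mstar_mstar[simp]: "mstar c (mstar c A) = A"
  by (rule eq_matI, auto)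

lemma mstar_mult: assumes "dim_col A = dim_row B" shows "mstar c (A * B) = mstar c B * mstar c A"
  by (rule eq_matI, insert assms, auto simp: scalar_prod_def sf_sum sf_mult mult.commute)

lemma mstar_add: "dim_row A = dim_row B \<Longrightarrow> dim_col A = dim_col B \<Longrightarrow> mstar c (A + B) = mstar c A + mstar c B"
  by (rule eq_matI, auto simp: sf_add)
lemma mstar_minus: "dim_row A = dim_row B \<Longrightarrow> dim_col A = dim_col B \<Longrightarrow> mstar c (A - B) = mstar c A - mstar c B"
  by (rule eq_matI, auto simp: sf_minus)
lemma mstar_uminus: "mstar c (- A) = - mstar c A"
  by (rule eq_matI, auto simp: sf_uminus)
lemma mstar_zero: "mstar c (0\<^sub>m r k) = 0\<^sub>m k r"
  by (rule eq_matI, auto simp: sf_def)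
lemma mstar_one: "mstar c (1\<^sub>m r) = 1\<^sub>m r"
  by (rule eq_matI, auto simp: sf_def)
lemma mstar_smult1: "mstar c ((1::complex) \<cdot>\<^sub>m A) = mstar c A" by simp
lemma mstar_smult: "mstar c (a \<cdot>\<^sub>m A) = sf c a \<cdot>\<^sub>m mstar c A"
  by (rule eq_matI, auto simp: sf_mult)
lemma sf_one[simp]: "sf c 1 = 1" and sf_mone[simp]: "sf c (-1) = -1" by (auto simp: sf_def)

lemma E_smult_one: "E ((1::complex) \<cdot>\<^sub>m A) = E A" by simp
lemma E_smult_mone: "E ((-1::complex) \<cdot>\<^sub>m A) = - E A" by (simp add: E_uminus)

lemma minv_props: assumes A: "A \<in> carrier_mat r r" and inv: "invertible_mat A"
  shows "A * minv A = 1\<^sub>m r" "minv A * A = 1\<^sub>m r" "minv A \<in> carrier_mat r r"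
proof -
  from inv obtain B where AB: "A * B = 1\<^sub>m (dim_row A)" and BA: "B * A = 1\<^sub>m (dim_row B)"
    unfolding invertible_mat_def inverts_mat_def by auto
  have Bc: "B \<in> carrier_mat r r"
    using AB BA A by (metis carrier_matD carrier_matI index_mult_mat(2,3) index_one_mat(2,3))
  have "A \<in> Units (ring_mat TYPE(complex) r undefined)"
    unfolding Units_def ring_mat_def using A Bc AB BA by auto
  note U = this
  have "mat_inverse A \<noteq> None"
  proof
    assume "mat_inverse A = None"
    from mat_inverse(1)[OF A this, of undefined] U show False by contradiction
  qed
  then obtain C where "mat_inverse A = Some C" by auto
  from mat_inverse(2)[OF A this] this
  show "A * minv A = 1\<^sub>m r" "minv A * A = 1\<^sub>m r" "minv A \<in> carrier_mat r r"
    unfolding minv_def by auto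
qed



lemma spec_char_root: fixes A :: "complex mat"
  assumes A: "A \<in> carrier_mat p p" and cp: "char_poly A = (\<Prod>a\<leftarrow>es. [:- a, 1:])"
    and x: "x \<in> set es"
  shows "x \<in> spectrum A"
proof -
  have "poly (char_poly A) x = (\<Prod>a\<leftarrow>es. x - a)"
    unfolding cp by (induct es, auto simp: algebra_simps)
  also have "\<dots> = 0" using x by (induct es, auto)
  finally show ?thesis unfolding spectrum_root_char_poly[OF A] by simp
qed

lemma sylvester_zero:
  fixes X A B :: "complex mat"
  assumes X: "X \<in> carrier_mat q p" and A: "A \<in> carrier_mat p p" and B: "B \<in> carrier_mat q q"
  and eq: "X * A = B * X" and disj: "spectrum A \<inter> spectrum B = {}"
  shows "X = 0\<^sub>m q p"
proof -
  obtain es where cp: "char_poly A = (\<Prod>a\<leftarrow>es. [:- a, 1:])"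
    using char_poly_factorized[OF A] by auto
  obtain T Pm Qm where sch: "schur_decomposition A es = (T,Pm,Qm)"
    by (cases "schur_decomposition A es", auto)
  from schur_decomposition[OF A cp sch]
  have sim: "similar_mat_wit A T Pm Qm" and ut: "upper_triangular T" and dg: "diag_mat T = es" by auto
  from sim A have T: "T \<in> carrier_mat p p" and Pm: "Pm \<in> carrier_mat p p" and Qm: "Qm \<in> carrier_mat p p"
    and PQ: "Pm * Qm = 1\<^sub>m p" and QP: "Qm * Pm = 1\<^sub>m p" and AT: "A = Pm * T * Qm"
    unfolding similar_mat_wit_def Let_def by auto
  define Y where "Y = X * Pm"
  have Y: "Y \<in> carrier_mat q p" unfolding Y_def using X Pm by auto
  have YT: "Y * T = B * Y"
  proof -
    have "Y * T = X * Pm * T * (Qm * Pm)" unfolding Y_def QP using X Pm T by simp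
    also have "\<dots> = X * (Pm * T * Qm) * Pm" using X Pm T Qm
      by (intro E_inj) (simp_all add: E_mult mult.assoc carrier_matD)
    also have "\<dots> = B * Y" unfolding Y_def AT[symmetric] eq using X B Pm by simp
    finally show ?thesis .
  qed
  have colz: "\<forall>i<q. Y $$ (i,j) = 0" if "j < p" for j
    using that
  proof (induct j rule: less_induct)
    case (less j)
    define v where "v = col Y j"
    have v: "v \<in> carrier_vec q" unfolding v_def using Y by auto
    have "B *\<^sub>v v = T $$ (j,j) \<cdot>\<^sub>v v"
    proof (rule eq_vecI)
      fix i assume i: "i < dim_vec (T $$ (j,j) \<cdot>\<^sub>v v)"
      hence i: "i < q" using v by auto
      have "(B *\<^sub>v v) $ i = (B * Y) $$ (i,j)" unfolding v_def using B Y i less by auto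
      also have "\<dots> = (Y * T) $$ (i,j)" unfolding YT ..
      also have "\<dots> = (\<Sum>k\<in>{0..<p}. Y $$ (i,k) * T $$ (k,j))"
        using Y T i less by (auto simp: scalar_prod_def)
      also have "\<dots> = Y $$ (i,j) * T $$ (j,j)"
      proof -
        have "(\<Sum>k\<in>{0..<p}. Y $$ (i,k) * T $$ (k,j)) = Y $$ (i,j) * T $$ (j,j) + (\<Sum>k\<in>{0..<p}-{j}. Y $$ (i,k) * T $$ (k,j))"
          using less(2) by (subst sum.remove[of _ j], auto)
        moreover have "(\<Sum>k\<in>{0..<p}-{j}. Y $$ (i,k) * T $$ (k,j)) = 0"
        proof (rule sum.neutral, intro ballI)
          fix k assume k: "k \<in> {0..<p}-{j}"
          show "Y $$ (i,k) * T $$ (k,j) = 0"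
          proof (cases "k < j")
            case True then show ?thesis using less(1)[of k] less(2) i by auto
          next
            case False then have "j < k" using k by auto
            then have "T $$ (k,j) = 0" using ut T k by (auto simp: upper_triangular_def)
            then show ?thesis by simp
          qed
        qed
        ultimately show ?thesis by simp
      qed
      also have "\<dots> = (T $$ (j,j) \<cdot>\<^sub>v v) $ i" unfolding v_def using i Y less by auto
      finally show "(B *\<^sub>v v) $ i = (T $$ (j,j) \<cdot>\<^sub>v v) $ i" .
    qed (use v B in auto)
    note Bv = this
    show ?case
    proof (rule ccontr)
      assume "\<not> (\<forall>i<q. Y $$ (i,j) = 0)"
      then obtain i where i: "i < q" "Y $$ (i,j) \<noteq> 0" by auto
      have "v $ i \<noteq> 0" unfolding v_def using i Y less by auto
      hence "v \<noteq> 0\<^sub>v q" using i by auto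
      hence "eigenvector B v (T $$ (j,j))" unfolding eigenvector_def using v B Bv by auto
      hence "T $$ (j,j) \<in> spectrum B" unfolding spectrum_def eigenvalue_def by auto
      moreover have "T $$ (j,j) \<in> spectrum A"
        by (rule spec_char_root[OF A cp], insert dg T less(2), auto simp: diag_mat_def)
      ultimately show False using disj by auto
    qed
  qed
  have Y0: "Y = 0\<^sub>m q p" by (rule eq_matI, insert colz Y, auto)
  have "X = X * (Pm * Qm)" using X PQ by simp
  also have "\<dots> = Y * Qm" unfolding Y_def using X Pm Qm by simp
  finally show ?thesis unfolding Y0 using Qm by simp
qed



lemma absorb:
  assumes UV: "U * V = 1\<^sub>m k" and d: "dim_col U = dim_row V"
  shows "dim_row A = k \<Longrightarrow> E U * (E V * E A) = E A"
    "dim_row A = k \<Longrightarrow> E U * (E V * (E A * y)) = E A * y"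
    "dim_col A = k \<Longrightarrow> E A * (E U * E V) = E A"
proof -
  have dV: "dim_col V = k" and dU: "dim_row U = k" using arg_cong[OF UV, of dim_col] arg_cong[OF UV, of dim_row] by auto
  have EUV: "E U * E V = E (1\<^sub>m k)" using UV d by (simp add: E_mult[symmetric])
  show "dim_row A = k \<Longrightarrow> E U * (E V * E A) = E A"
    by (simp add: mult.assoc[symmetric] EUV E_mult[symmetric])
  show "dim_row A = k \<Longrightarrow> E U * (E V * (E A * y)) = E A * y"
    by (simp add: mult.assoc[symmetric] EUV E_mult[symmetric])
  show "dim_col A = k \<Longrightarrow> E A * (E U * E V) = E A"
    by (simp add: EUV E_mult[symmetric])
qed

lemma mstar_smult_sf: "mstar c (a \<cdot>\<^sub>m A) = sf c a \<cdot>\<^sub>m mstar c A" by (rule mstar_smult)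
lemma smult_zero_mat': "(c::complex) \<cdot>\<^sub>m 0\<^sub>m r k = 0\<^sub>m r k" by (rule eq_matI, auto)

lemmas push = E_mult E_add E_minus E_uminus E_zero mstar_mult mstar_add mstar_minus mstar_uminus
  mstar_smult mstar_zero smult_one_mat smult_mone_mat

theorem theorem3p8:
  fixes realK conjT :: bool
    and e1 e2 :: complex
    and n p1 p2 :: nat
    and M D K Xc Lc Xf Lf La P :: "complex mat"
  assumes e1: "e1 \<in> {1, -1}" and e2: "e2 \<in> {1, -1}"
    and carr: "M \<in> carrier_mat n n" "D \<in> carrier_mat n n" "K \<in> carrier_mat n n"
      "Xc \<in> carrier_mat n p1" "Lc \<in> carrier_mat p1 p1"
      "Xf \<in> carrier_mat n p2" "Lf \<in> carrier_mat p2 p2"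
      "La \<in> carrier_mat p1 p1" "P \<in> carrier_mat p1 p1"
    and field: "realK \<longrightarrow> (real_mat M \<and> real_mat D \<and> real_mat K \<and> real_mat Xc \<and> real_mat Lc
                   \<and> real_mat Xf \<and> real_mat Lf \<and> real_mat La \<and> real_mat P)"
    and symM: "mstar conjT M = e1 \<cdot>\<^sub>m M"
    and symD: "mstar conjT D = e2 \<cdot>\<^sub>m D"
    and symK: "mstar conjT K = e1 \<cdot>\<^sub>m K"
    and invc: "invariant_pair M D K Xc Lc"
    and invf: "invariant_pair M D K Xf Lf"
    and Pinv: "invertible_mat P"
    and Rinv: "invertible_mat
        (mstar conjT Xc * M * Xc * P * La * minv P
         + (e1 * e2) \<cdot>\<^sub>m (mstar conjT Lc * mstar conjT Xc * M * Xc)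
         + mstar conjT Xc * D * Xc)"
    and spec: "spectrum Lc \<inter> spectrum ((e1 * e2) \<cdot>\<^sub>m mstar conjT Lf) = {}"
  shows "let S = \<lambda>A. mstar conjT A;
             e = e1 * e2;
             R = S Xc * M * Xc * P * La * minv P + e \<cdot>\<^sub>m (S Lc * S Xc * M * Xc) + S Xc * D * Xc;
             Z = (Lc - P * La * minv P) * minv R;
             dM = M * Xc * Z * S Xc * M;
             dD = e \<cdot>\<^sub>m (M * Xc * Z * S Lc * S Xc * M) + M * Xc * Z * S Xc * D
                  + M * Xc * Lc * Z * S Xc * M + D * Xc * Z * S Xc * M;
             dK = e \<cdot>\<^sub>m (M * Xc * Lc * Z * S Lc * S Xc * M) + M * Xc * Lc * Z * S Xc * D
                  + e \<cdot>\<^sub>m (D * Xc * Z * S Lc * S Xc * M) + D * Xc * Z * S Xc * D;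
             M' = M + dM; D' = D + dD; K' = K + dK;
             Smat = S Xc * M * Xc * Lc + e \<cdot>\<^sub>m (S Lc * S Xc * M * Xc) + S Xc * D * Xc
         in invariant_pair M' D' K' (Xc * P) La
          \<and> invariant_pair M' D' K' Xf Lf
          \<and> (Smat * P * La * minv P = e1 \<cdot>\<^sub>m S (Smat * P * La * minv P) \<longrightarrow>
               S M' = e1 \<cdot>\<^sub>m M' \<and> S D' = e2 \<cdot>\<^sub>m D' \<and> S K' = e1 \<cdot>\<^sub>m K')"

proof -
  note dims = carrier_matD[OF carr(1)] carrier_matD[OF carr(2)] carrier_matD[OF carr(3)]
    carrier_matD[OF carr(4)] carrier_matD[OF carr(5)] carrier_matD[OF carr(6)]
    carrier_matD[OF carr(7)] carrier_matD[OF carr(8)] carrier_matD[OF carr(9)]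
  have e1c: "e1 = 1 \<or> e1 = -1" using e1 by auto
  have e2c: "e2 = 1 \<or> e2 = -1" using e2 by auto
  note Pp = minv_props[OF carr(9) Pinv]
  define R where "R = mstar conjT Xc * M * Xc * P * La * minv P
         + (e1 * e2) \<cdot>\<^sub>m (mstar conjT Lc * mstar conjT Xc * M * Xc) + mstar conjT Xc * D * Xc"
  have Rc: "R \<in> carrier_mat p1 p1" unfolding R_def using carr Pp by auto
  note Rp = minv_props[OF Rc Rinv[folded R_def]]
  define N where "N = Lc - P * La * minv P"
  define Z where "Z = N * minv R"
  define dM where "dM = M * Xc * Z * mstar conjT Xc * M"
  define dD where "dD = (e1 * e2) \<cdot>\<^sub>m (M * Xc * Z * mstar conjT Lc * mstar conjT Xc * M) + M * Xc * Z * mstar conjT Xc * D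
                  + M * Xc * Lc * Z * mstar conjT Xc * M + D * Xc * Z * mstar conjT Xc * M"
  define dK where "dK = (e1 * e2) \<cdot>\<^sub>m (M * Xc * Lc * Z * mstar conjT Lc * mstar conjT Xc * M) + M * Xc * Lc * Z * mstar conjT Xc * D
                  + (e1 * e2) \<cdot>\<^sub>m (D * Xc * Z * mstar conjT Lc * mstar conjT Xc * M) + D * Xc * Z * mstar conjT Xc * D"
  define M' where "M' = M + dM"
  define D' where "D' = D + dD"
  define K' where "K' = K + dK"
  define Smat where "Smat = mstar conjT Xc * M * Xc * Lc + (e1 * e2) \<cdot>\<^sub>m (mstar conjT Lc * mstar conjT Xc * M * Xc) + mstar conjT Xc * D * Xc"
  have Nc: "N \<in> carrier_mat p1 p1" unfolding N_def using carr Pp by auto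
  have Zc: "Z \<in> carrier_mat p1 p1" unfolding Z_def using Nc Rp by auto
  have Sc: "Smat \<in> carrier_mat p1 p1" unfolding Smat_def using carr by auto
  note dims2 = dims carrier_matD[OF Pp(3)] carrier_matD[OF Rc] carrier_matD[OF Rp(3)]
    carrier_matD[OF Nc] carrier_matD[OF Zc] carrier_matD[OF Sc]
  note abs = absorb[OF Pp(1)] absorb[OF Pp(2)] absorb[OF Rp(1)] absorb[OF Rp(2)]
  have dM'c: "dim_row M' = n" "dim_col M' = n" "dim_row D' = n" "dim_col D' = n" "dim_row K' = n" "dim_col K' = n"
    unfolding M'_def D'_def K'_def dM_def dD_def dK_def by (simp_all add: dims2)
  have Qc0: "M * Xc * (Lc * Lc) + D * Xc * Lc + K * Xc = 0\<^sub>m n p1"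
    using invc unfolding invariant_pair_def by (simp add: dims)
  have Qf0: "M * Xf * (Lf * Lf) + D * Xf * Lf + K * Xf = 0\<^sub>m n p2"
    using invf unfolding invariant_pair_def by (simp add: dims)
  have ZR: "Z * R = N"
    by (intro E_inj) (simp_all add: Z_def E_mult mult.assoc abs dims2)
  have P1: "invariant_pair M' D' K' (Xc * P) La"
  proof -
    have "E (M' * (Xc * P) * (La * La) + D' * (Xc * P) * La + K' * (Xc * P)) =
        E (M * Xc * (Lc * Lc) + D * Xc * Lc + K * Xc) * E P
        + E M * E Xc * E (Z * R - N) * E (P * La * minv P) * E P
        + E M * E Xc * E Lc * E (Z * R - N) * E P + E D * E Xc * E (Z * R - N) * E P"
      unfolding M'_def D'_def K'_def dM_def dD_def dK_def R_def N_def
      using e1c e2c by (elim disjE; simp add: push abs dims2 algebra_simps)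
    also have "\<dots> = E (0\<^sub>m n p1)" by (simp add: ZR Qc0 E_minus E_zero dims2)
    finally have "M' * (Xc * P) * (La * La) + D' * (Xc * P) * La + K' * (Xc * P) = 0\<^sub>m n p1"
      by (rule E_inj) (simp_all add: dM'c dims2)
    thus ?thesis unfolding invariant_pair_def by (simp add: dM'c dims2)
  qed
  define Y where "Y = mstar conjT Xc * M * Xf * Lf + (e1 * e2) \<cdot>\<^sub>m (mstar conjT Lc * mstar conjT Xc * M * Xf) + mstar conjT Xc * D * Xf"
  have Yc: "Y \<in> carrier_mat p1 p2" unfolding Y_def using carr by auto
  note dims3 = dims2 carrier_matD[OF Yc]
  have SYrel: "mstar conjT Y * Lc = ((e1 * e2) \<cdot>\<^sub>m mstar conjT Lf) * mstar conjT Y"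
  proof -
    have "E (mstar conjT Y * Lc) = E (((e1 * e2) \<cdot>\<^sub>m mstar conjT Lf) * mstar conjT Y)
       + E ((e2 \<cdot>\<^sub>m mstar conjT Xf) * (M * Xc * (Lc * Lc) + D * Xc * Lc + K * Xc))
       - E (((e1 * e2) \<cdot>\<^sub>m mstar conjT (M * Xf * (Lf * Lf) + D * Xf * Lf + K * Xf)) * Xc)"
      unfolding Y_def using e1c e2c by (elim disjE; simp add: push symM symD symK dims2 algebra_simps)
    also have "\<dots> = E (((e1 * e2) \<cdot>\<^sub>m mstar conjT Lf) * mstar conjT Y)"
      by (simp add: Qc0 Qf0 push E_zero dims3)
    finally show ?thesis by (rule E_inj) (simp_all add: dims3)
  qed
  have SY0: "mstar conjT Y = 0\<^sub>m p2 p1"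
    by (rule sylvester_zero[OF _ carr(5) _ SYrel]) (use carr Yc spec in auto)
  have Y0: "Y = 0\<^sub>m p1 p2" using arg_cong[OF SY0, of "mstar conjT"] by (simp add: mstar_zero)
  have P2: "invariant_pair M' D' K' Xf Lf"
  proof -
    have "E (M' * Xf * (Lf * Lf) + D' * Xf * Lf + K' * Xf) =
        E (M * Xf * (Lf * Lf) + D * Xf * Lf + K * Xf) + E M * E Xc * E Z * E Y * E Lf + E M * E Xc * E Lc * E Z * E Y + E D * E Xc * E Z * E Y"
      unfolding M'_def D'_def K'_def dM_def dD_def dK_def Y_def
      using e1c e2c by (elim disjE; simp add: push dims2 algebra_simps)
    also have "\<dots> = E (0\<^sub>m n p2)" by (simp add: Qf0 Y0 E_zero)
    finally have "M' * Xf * (Lf * Lf) + D' * Xf * Lf + K' * Xf = 0\<^sub>m n p2"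
      by (rule E_inj) (simp_all add: dM'c dims2)
    thus ?thesis unfolding invariant_pair_def by (simp add: dM'c dims2)
  qed
  have P3: "mstar conjT M' = e1 \<cdot>\<^sub>m M' \<and> mstar conjT D' = e2 \<cdot>\<^sub>m D' \<and> mstar conjT K' = e1 \<cdot>\<^sub>m K'"
    if H: "(Smat * P * La * minv P) = e1 \<cdot>\<^sub>m mstar conjT (Smat * P * La * minv P)"
  proof -
    have Hd: "(Smat * P * La * minv P) - e1 \<cdot>\<^sub>m mstar conjT (Smat * P * La * minv P) = 0\<^sub>m p1 p1"
      by (rule E_inj) (use arg_cong[OF H, of E] in \<open>simp_all add: E_minus E_zero dims2\<close>)
    have C: "mstar conjT N * R = e1 \<cdot>\<^sub>m (mstar conjT R * N)"
    proof -
      have "E (mstar conjT N * R) = E (e1 \<cdot>\<^sub>m (mstar conjT R * N))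
         - E ((e1 * e2) \<cdot>\<^sub>m (mstar conjT Xc * (M * Xc * (Lc * Lc) + D * Xc * Lc + K * Xc)))
         + E ((e1 * e2 * e1) \<cdot>\<^sub>m (mstar conjT (M * Xc * (Lc * Lc) + D * Xc * Lc + K * Xc) * Xc))
         + E ((e1 * e2) \<cdot>\<^sub>m ((Smat * P * La * minv P) - e1 \<cdot>\<^sub>m mstar conjT (Smat * P * La * minv P)))"
        unfolding N_def R_def Smat_def using e1c e2c
        by (elim disjE; simp add: push symM symD symK dims2 algebra_simps)
      also have "\<dots> = E (e1 \<cdot>\<^sub>m (mstar conjT R * N))"
        unfolding Hd Qc0 by (simp add: push E_zero dims2 smult_zero_mat')
      finally show ?thesis by (rule E_inj) (simp_all add: dims2)
    qed
    have SRi: "mstar conjT (minv R) * mstar conjT R = 1\<^sub>m p1"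
      using arg_cong[OF Rp(1), of "mstar conjT"] by (simp add: mstar_mult mstar_one dims2)
    note abs2 = absorb[OF SRi]
    have "E (mstar conjT Z) = E (mstar conjT (minv R)) * E (mstar conjT N)"
      unfolding Z_def by (simp add: push dims2)
    also have "\<dots> = E (mstar conjT (minv R)) * E (mstar conjT N) * E R * E (minv R)"
      by (simp add: mult.assoc abs dims2)
    also have "\<dots> = E (mstar conjT (minv R)) * E (mstar conjT N * R) * E (minv R)"
      by (simp add: mult.assoc E_mult dims2)
    also have "\<dots> = E (mstar conjT (minv R)) * E (e1 \<cdot>\<^sub>m (mstar conjT R * N)) * E (minv R)"
      unfolding C ..
    also have "\<dots> = E (e1 \<cdot>\<^sub>m Z)"
      unfolding Z_def using e1c by (elim disjE; simp add: push abs2 dims2 algebra_simps)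
    finally have SZ: "mstar conjT Z = e1 \<cdot>\<^sub>m Z"
      by (rule E_inj) (simp_all add: dims2)
    have "mstar conjT M' = e1 \<cdot>\<^sub>m M'"
      apply (rule E_inj)
      subgoal unfolding M'_def dM_def using e1c e2c
        by (elim disjE; simp add: push symM symD symK SZ dims2 algebra_simps)
      by (simp_all add: dims2 dM'c)
    moreover have "mstar conjT D' = e2 \<cdot>\<^sub>m D'"
      apply (rule E_inj)
      subgoal unfolding D'_def dD_def using e1c e2c
        by (elim disjE; simp add: push symM symD symK SZ dims2 algebra_simps)
      by (simp_all add: dims2 dM'c)
    moreover have "mstar conjT K' = e1 \<cdot>\<^sub>m K'"
      apply (rule E_inj)
      subgoal unfolding K'_def dK_def using e1c e2c
        by (elim disjE; simp add: push symM symD symK SZ dims2 algebra_simps)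
      by (simp_all add: dims2 dM'c)
    ultimately show ?thesis by blast
  qed
  have main: "invariant_pair M' D' K' (Xc * P) La \<and> invariant_pair M' D' K' Xf Lf
     \<and> (Smat * P * La * minv P = e1 \<cdot>\<^sub>m mstar conjT (Smat * P * La * minv P) \<longrightarrow>
         mstar conjT M' = e1 \<cdot>\<^sub>m M' \<and> mstar conjT D' = e2 \<cdot>\<^sub>m D' \<and> mstar conjT K' = e1 \<cdot>\<^sub>m K')"
    using P1 P2 P3 by blast
  show ?thesis unfolding Let_def using main
    unfolding M'_def D'_def K'_def dM_def dD_def dK_def Z_def N_def R_def Smat_def .
qed

end
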